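(* Consider sequential first-price auctions in which all buyers have additive valuations. Then: (a) there is an absolute constant $c>0$ such that for every instance with $m$ items (any number of additive buyers, any selling-order function and any tie-breaking rule), the social welfare of every pure subgame perfect equilibrium is at least $c\cdot \mathrm{OPT}/m$, where $\mathrm{OPT}$ is the maximum possible social welfare; i.e., the price of anarchy is $O(m)$. (b) There is an absolute constant $c'>0$ such that for every $m$ there is an instance with exactly two additive buyers and $m$ identical items (every buyer has the same value for every item, so the selling order is irrelevant) whose price of anarchy is at least $c' m$. Hence the price of anarchy of sequential first-price auctions with additive buyers is $\Theta(m)$.
   Context: Setting (sequential first-price auctions): there is a set $M$ of $m$ items and a set $N$ of $n$ buyers. Buyer $i$ has a valuation $v_i:2^M\to\mathbb{R}_{\ge 0}$ with $v_i(\emptyset)=0$ and quasi-linear utility (value of the set of items obtained minus total payment). A buyer is additive if there are $v_{i,j}\ge 0$ with $v_i(S)=\sum_{j\in S}v_{i,j}$. Items are sold one at a time; each item is sold by a sealed-bid first-price auction without reserve price: every buyer submits a nonnegative bid, a highest bidder wins (ties broken by a tie-breaking rule fixed by the seller) and pays his bid. The seller fixes in advance a selling-order function choosing the next item as a function of the allocation of the items sold so far, together with the tie-breaking rule. There is full information (all valuations are common knowledge). A pure subgame perfect equilibrium (SPE) is a profile of pure strategies (a bid for each buyer at each node of the game tree) that is a Nash equilibrium in every subgame. The social welfare of an outcome is $\sum_i v_i(\text{bundle of } i)$. The price of anarchy of an instance is the ratio of the maximum social welfare over all allocations to the minimum social welfare of a pure SPE outcome. *)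

theory Defs
  imports Complex_Main "HOL-Library.FuncSet"
begin

text \<open>
  Buyers are 0..<n, items are 0..<m. An additive valuation is given by
  per-item values v i j (buyer i, item j).
  A node of the game tree is the history of bid profiles of the stages
  played so far, most recent first.
  An allocation (of items sold so far) is a partial map item => buyer.
\<close>

type_synonym profile = "nat \<Rightarrow> real"
type_synonym history = "profile list"
type_synonym order_fn = "(nat \<Rightarrow> nat option) \<Rightarrow> nat"
type_synonym tiebreak_fn = "history \<Rightarrow> profile \<Rightarrow> nat"
type_synonym strategy_profile = "nat \<Rightarrow> history \<Rightarrow> real"

definition valid_order :: "nat \<Rightarrow> order_fn \<Rightarrow> bool" where
  "valid_order m \<sigma> \<longleftrightarrow>
     (\<forall>A. dom A \<subseteq> {0..<m} \<longrightarrow> dom A \<noteq> {0..<m} \<longrightarrow> \<sigma> A \<in> {0..<m} - dom A)"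

definition valid_tiebreak :: "nat \<Rightarrow> tiebreak_fn \<Rightarrow> bool" where
  "valid_tiebreak n tb \<longleftrightarrow> (\<forall>h b. tb h b < n \<and> (\<forall>i<n. b i \<le> b (tb h b)))"

definition valid_bids :: "nat \<Rightarrow> profile \<Rightarrow> bool" where
  "valid_bids n b \<longleftrightarrow> (\<forall>i<n. 0 \<le> b i) \<and> (\<forall>i. n \<le> i \<longrightarrow> b i = 0)"

definition valid_node :: "nat \<Rightarrow> history \<Rightarrow> bool" where
  "valid_node n h \<longleftrightarrow> (\<forall>b\<in>set h. valid_bids n b)"

definition bidvec :: "nat \<Rightarrow> strategy_profile \<Rightarrow> history \<Rightarrow> profile" where
  "bidvec n s h = (\<lambda>i. if i < n then s i h else 0)"

primrec alloc :: "order_fn \<Rightarrow> tiebreak_fn \<Rightarrow> history \<Rightarrow> (nat \<Rightarrow> nat option)" where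
  "alloc \<sigma> tb [] = Map.empty"
| "alloc \<sigma> tb (b # h) = (alloc \<sigma> tb h)(\<sigma> (alloc \<sigma> tb h) \<mapsto> tb h b)"

primrec payment :: "tiebreak_fn \<Rightarrow> history \<Rightarrow> nat \<Rightarrow> real" where
  "payment tb [] i = 0"
| "payment tb (b # h) i = payment tb h i + (if tb h b = i then b i else 0)"

primrec playn :: "nat \<Rightarrow> strategy_profile \<Rightarrow> nat \<Rightarrow> history \<Rightarrow> history" where
  "playn n s 0 h = h"
| "playn n s (Suc k) h = playn n s k (bidvec n s h # h)"

definition outcome :: "nat \<Rightarrow> nat \<Rightarrow> strategy_profile \<Rightarrow> history \<Rightarrow> history" where
  "outcome n m s h = playn n s (m - length h) h"

definition bundle_value :: "nat \<Rightarrow> (nat \<Rightarrow> nat \<Rightarrow> real) \<Rightarrow> order_fn \<Rightarrow> tiebreak_fn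
    \<Rightarrow> history \<Rightarrow> nat \<Rightarrow> real" where
  "bundle_value m v \<sigma> tb h i = (\<Sum>j<m. if alloc \<sigma> tb h j = Some i then v i j else 0)"

definition utility :: "nat \<Rightarrow> (nat \<Rightarrow> nat \<Rightarrow> real) \<Rightarrow> order_fn \<Rightarrow> tiebreak_fn
    \<Rightarrow> history \<Rightarrow> nat \<Rightarrow> real" where
  "utility m v \<sigma> tb h i = bundle_value m v \<sigma> tb h i - payment tb h i"

definition welfare :: "nat \<Rightarrow> nat \<Rightarrow> (nat \<Rightarrow> nat \<Rightarrow> real) \<Rightarrow> order_fn \<Rightarrow> tiebreak_fn
    \<Rightarrow> history \<Rightarrow> real" where
  "welfare n m v \<sigma> tb h = (\<Sum>i<n. bundle_value m v \<sigma> tb h i)"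

definition is_SPE :: "nat \<Rightarrow> nat \<Rightarrow> (nat \<Rightarrow> nat \<Rightarrow> real) \<Rightarrow> order_fn \<Rightarrow> tiebreak_fn
    \<Rightarrow> strategy_profile \<Rightarrow> bool" where
  "is_SPE n m v \<sigma> tb s \<longleftrightarrow>
     (\<forall>i<n. \<forall>h. valid_node n h \<and> length h < m \<longrightarrow> 0 \<le> s i h) \<and>
     (\<forall>h. valid_node n h \<and> length h < m \<longrightarrow>
        (\<forall>i<n. \<forall>d::history \<Rightarrow> real.
           (\<forall>h'. valid_node n h' \<and> length h' < m \<longrightarrow> 0 \<le> d h') \<longrightarrow>
           utility m v \<sigma> tb (outcome n m (s(i := d)) h) i
             \<le> utility m v \<sigma> tb (outcome n m s h) i))"

definition opt :: "nat \<Rightarrow> nat \<Rightarrow> (nat \<Rightarrow> nat \<Rightarrow> real) \<Rightarrow> real" where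
  "opt n m v = Max ((\<lambda>f. \<Sum>j<m. v (f j) j) ` ({0..<m} \<rightarrow>\<^sub>E {0..<n}))"

end

theory Submission
  imports Defs
begin


lemma alloc_dom:
  assumes vo: "valid_order m \<sigma>"
  shows "length h \<le> m \<Longrightarrow> dom (alloc \<sigma> tb h) \<subseteq> {0..<m} \<and> card (dom (alloc \<sigma> tb h)) = length h"
proof (induction h)
  case Nil then show ?case by simp
next
  case (Cons b h)
  then have l: "length h < m" by simp
  with Cons.IH have ih: "dom (alloc \<sigma> tb h) \<subseteq> {0..<m}" "card (dom (alloc \<sigma> tb h)) = length h" by auto
  have "dom (alloc \<sigma> tb h) \<noteq> {0..<m}" using ih(2) l by auto
  with ih(1) vo have j: "\<sigma> (alloc \<sigma> tb h) \<in> {0..<m} - dom (alloc \<sigma> tb h)" unfolding valid_order_def by blast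
  have fin: "finite (dom (alloc \<sigma> tb h))" using ih(1) finite_subset by blast
  have e: "dom (alloc \<sigma> tb (b#h)) = insert (\<sigma> (alloc \<sigma> tb h)) (dom (alloc \<sigma> tb h))" by simp
  show ?case unfolding e using ih j fin by (simp add: card_insert_disjoint)
qed

lemma alloc_fresh:
  assumes vo: "valid_order m \<sigma>" and l: "length h < m"
  shows "\<sigma> (alloc \<sigma> tb h) < m \<and> alloc \<sigma> tb h (\<sigma> (alloc \<sigma> tb h)) = None"
proof -
  from alloc_dom[OF vo, of h tb] l have ih: "dom (alloc \<sigma> tb h) \<subseteq> {0..<m}" "card (dom (alloc \<sigma> tb h)) = length h" by auto
  have "dom (alloc \<sigma> tb h) \<noteq> {0..<m}" using ih(2) l by auto
  with ih(1) vo have j: "\<sigma> (alloc \<sigma> tb h) \<in> {0..<m} - dom (alloc \<sigma> tb h)" unfolding valid_order_def by blast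
  then show ?thesis by auto
qed

lemma bundle_step:
  assumes vo: "valid_order m \<sigma>" and l: "length h < m"
  shows "bundle_value m v \<sigma> tb (b#h) i = bundle_value m v \<sigma> tb h i + (if tb h b = i then v i (\<sigma> (alloc \<sigma> tb h)) else 0)"
proof -
  define j0 where "j0 = \<sigma> (alloc \<sigma> tb h)"
  from alloc_fresh[OF vo l] have j0: "j0 < m" "alloc \<sigma> tb h j0 = None" unfolding j0_def by auto
  have "bundle_value m v \<sigma> tb (b#h) i = (\<Sum>j<m. (if alloc \<sigma> tb h j = Some i then v i j else 0) + (if j = j0 then (if tb h b = i then v i j0 else 0) else 0))"
    unfolding bundle_value_def by (rule sum.cong) (auto simp: j0_def[symmetric] j0)
  also have "\<dots> = bundle_value m v \<sigma> tb h i + (if tb h b = i then v i j0 else 0)"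
    unfolding bundle_value_def sum.distrib using j0 by simp
  finally show ?thesis unfolding j0_def .
qed

lemma util_step:
  assumes vo: "valid_order m \<sigma>" and l: "length h < m"
  shows "utility m v \<sigma> tb (b#h) i = utility m v \<sigma> tb h i + (if tb h b = i then v i (\<sigma> (alloc \<sigma> tb h)) - b i else 0)"
  unfolding utility_def using bundle_step[OF vo l, of v tb b i] by auto

lemma playn_len: "length (playn n s k h) = k + length h"
  by (induction k arbitrary: h) auto

lemma playn_Suc: "playn n s (Suc k) h = bidvec n s (playn n s k h) # playn n s k h"
  by (induction k arbitrary: h) auto

lemma playn_add: "playn n s (a + b) h = playn n s b (playn n s a h)"
  by (induction a arbitrary: h) auto

lemma playn_cong:
  "(\<forall>i h'. length h \<le> length h' \<longrightarrow> length h' < length h + k \<longrightarrow> s i h' = s' i h') \<Longrightarrow> playn n s k h = playn n s' k h"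
proof (induction k arbitrary: h)
  case 0 then show ?case by simp
next
  case (Suc k)
  have b: "bidvec n s h = bidvec n s' h" using Suc.prems unfolding bidvec_def by auto
  have "playn n s k (bidvec n s h # h) = playn n s' k (bidvec n s h # h)"
    by (rule Suc.IH) (use Suc.prems in auto)
  then show ?case using b by simp
qed

lemma bundle_nonneg: "(\<forall>i j. 0 \<le> v i j) \<Longrightarrow> 0 \<le> bundle_value m v \<sigma> tb h i"
  unfolding bundle_value_def by (rule sum_nonneg) auto



definition clean :: "history \<Rightarrow> bool" where "clean h \<longleftrightarrow> (\<forall>b\<in>set h. b 0 = 0)"
definition tbB :: "nat \<Rightarrow> tiebreak_fn" where
  "tbB m h b = (if b 1 > b 0 then 1 else if b 0 > b 1 then 0 else if clean h \<and> length h + 1 < m then 1 else 0)"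
definition sB :: strategy_profile where "sB i h = (if clean h then 0 else 1)"
definition vB :: "nat \<Rightarrow> nat \<Rightarrow> real" where "vB i j = (if i = 0 then 1 else 0)"
definition \<sigma>B :: "nat \<Rightarrow> order_fn" where "\<sigma>B m A = (LEAST j. j < m \<and> A j = None)"

lemma voB: "valid_order m (\<sigma>B m)"
  unfolding valid_order_def
proof (intro allI impI)
  fix A :: "nat \<Rightarrow> nat option" assume a: "dom A \<subseteq> {0..<m}" "dom A \<noteq> {0..<m}"
  then have "\<exists>j. j < m \<and> A j = None" by auto
  then have "\<sigma>B m A < m \<and> A (\<sigma>B m A) = None" unfolding \<sigma>B_def by (rule LeastI_ex)
  then show "\<sigma>B m A \<in> {0..<m} - dom A" by auto
qed

lemma vtB: "valid_tiebreak 2 (tbB m)"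
  unfolding valid_tiebreak_def tbB_def
  by (auto simp: less_2_cases_iff)

lemma clean_Cons[simp]: "clean (b # h) \<longleftrightarrow> b 0 = 0 \<and> clean h"
  unfolding clean_def by auto

lemma bv0[simp]: "bidvec 2 t h 0 = t 0 h" and bv1[simp]: "bidvec 2 t h 1 = t 1 h" and bv1'[simp]: "bidvec 2 t h (Suc 0) = t (Suc 0) h"
  unfolding bidvec_def by auto

abbreviation "UB m h i \<equiv> utility m vB (\<sigma>B m) (tbB m) h i"

lemma ustepB: "length h < m \<Longrightarrow> UB m (b#h) 0 = UB m h 0 + (if tbB m h b = 0 then 1 - b 0 else 0)"
  using util_step[OF voB, of h m vB "tbB m" b 0] by (simp add: vB_def)

lemma lemU:
  assumes t1: "\<forall>h. t 1 h = sB 1 h"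
  shows "\<not> clean h \<Longrightarrow> length h + k = m \<Longrightarrow> UB m (playn 2 t k h) 0 \<le> UB m h 0"
proof (induction k arbitrary: h)
  case 0 then show ?case by simp
next
  case (Suc k)
  define b where "b = bidvec 2 t h"
  have b1: "b 1 = 1" using t1 Suc.prems unfolding b_def sB_def by simp
  have "UB m (playn 2 t k (b#h)) 0 \<le> UB m (b#h) 0" by (rule Suc.IH) (use Suc.prems in auto)
  also have "\<dots> \<le> UB m h 0" using ustepB[of h m b] Suc.prems b1 by (auto simp: tbB_def split: if_splits)
  finally show ?case by (simp add: b_def)
qed

lemma lemC:
  assumes t1: "\<forall>h. t 1 h = sB 1 h"
  shows "clean h \<Longrightarrow> length h + k = m \<Longrightarrow> 1 \<le> k \<Longrightarrow> UB m (playn 2 t k h) 0 \<le> UB m h 0 + 1"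
proof (induction k arbitrary: h)
  case 0 then show ?case by simp
next
  case (Suc k)
  define b where "b = bidvec 2 t h"
  have b1: "b 1 = 0" using t1 Suc.prems unfolding b_def sB_def by simp
  have st: "UB m (b#h) 0 = UB m h 0 + (if tbB m h b = 0 then 1 - b 0 else 0)" using ustepB[of h m b] Suc.prems by simp
  have "UB m (playn 2 t k (b#h)) 0 \<le> UB m h 0 + 1"
  proof (cases "b 0 = 0")
    case True
    show ?thesis
    proof (cases k)
      case 0
      then show ?thesis using st b1 True by auto
    next
      case (Suc k')
      have "tbB m h b = 1" using Suc True b1 Suc.prems \<open>clean h\<close> Suc.prems(2) unfolding tbB_def by simp
      then have "UB m (b#h) 0 = UB m h 0" using st by simp
      moreover have "UB m (playn 2 t k (b#h)) 0 \<le> UB m (b#h) 0 + 1"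
        using Suc.IH[of "b#h"] Suc.prems True Suc by simp
      ultimately show ?thesis by simp
    qed
  next
    case False
    have "UB m (playn 2 t k (b#h)) 0 \<le> UB m (b#h) 0"
      by (rule lemU[where t=t, OF t1]) (use False Suc.prems in auto)
    also have "\<dots> \<le> UB m h 0 + 1" using st b1 False by (auto simp: tbB_def split: if_splits)
    finally show ?thesis .
  qed
  then show ?case by (simp add: b_def)
qed

lemma lemEU:
  shows "\<not> clean h \<Longrightarrow> length h + k = m \<Longrightarrow> UB m (playn 2 sB k h) 0 = UB m h 0"
proof (induction k arbitrary: h)
  case 0 then show ?case by simp
next
  case (Suc k)
  define b where "b = bidvec 2 sB h"
  have b: "b 1 = 1" "b 0 = 1" using Suc.prems unfolding b_def sB_def by simp_all
  have "UB m (playn 2 sB k (b#h)) 0 = UB m (b#h) 0" by (rule Suc.IH) (use Suc.prems b in auto)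
  also have "\<dots> = UB m h 0" using ustepB[of h m b] Suc.prems b by (auto simp: tbB_def)
  finally show ?case by (simp add: b_def)
qed

lemma lemEC:
  shows "clean h \<Longrightarrow> length h + k = m \<Longrightarrow> 1 \<le> k \<Longrightarrow> UB m (playn 2 sB k h) 0 = UB m h 0 + 1"
proof (induction k arbitrary: h)
  case 0 then show ?case by simp
next
  case (Suc k)
  define b where "b = bidvec 2 sB h"
  have b: "b 1 = 0" "b 0 = 0" using Suc.prems unfolding b_def sB_def by simp_all
  have st: "UB m (b#h) 0 = UB m h 0 + (if tbB m h b = 0 then 1 - b 0 else 0)" using ustepB[of h m b] Suc.prems by simp
  have "UB m (playn 2 sB k (b#h)) 0 = UB m h 0 + 1"
  proof (cases k)
    case 0
    then show ?thesis using st b Suc.prems by (auto simp: tbB_def)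
  next
    case (Suc k')
    have "tbB m h b = 1" using Suc b Suc.prems unfolding tbB_def by simp
    then have "UB m (b#h) 0 = UB m h 0" using st by simp
    moreover have "UB m (playn 2 sB k (b#h)) 0 = UB m (b#h) 0 + 1"
      using Suc.IH[of "b#h"] Suc.prems b Suc by simp
    ultimately show ?thesis by simp
  qed
  then show ?case by (simp add: b_def)
qed

lemma lemPC: "clean h \<Longrightarrow> payment (tbB m) (playn 2 sB k h) 0 = payment (tbB m) h 0"
proof (induction k arbitrary: h)
  case 0 then show ?case by simp
next
  case (Suc k)
  define b where "b = bidvec 2 sB h"
  have b: "b 0 = 0" using Suc.prems unfolding b_def sB_def by simp_all
  have "payment (tbB m) (playn 2 sB k (b#h)) 0 = payment (tbB m) (b#h) 0" by (rule Suc.IH) (use Suc.prems b in auto)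
  also have "\<dots> = payment (tbB m) h 0" using b by simp
  finally show ?case by (simp add: b_def)
qed

lemma lemP1:
  assumes t0: "\<forall>h. t 0 h = sB 0 h"
  shows "payment (tbB m) h 1 \<le> payment (tbB m) (playn 2 t k h) 1"
proof (induction k arbitrary: h)
  case 0 then show ?case by simp
next
  case (Suc k)
  define b where "b = bidvec 2 t h"
  have b: "0 \<le> b 0" using t0 unfolding b_def sB_def by simp
  have "payment (tbB m) h 1 \<le> payment (tbB m) (b#h) 1" using b by (auto simp: tbB_def)
  also have "\<dots> \<le> payment (tbB m) (playn 2 t k (b#h)) 1" by (rule Suc.IH)
  finally show ?case by (simp add: b_def)
qed

lemma lemP1eq: "payment (tbB m) (playn 2 sB k h) 1 = payment (tbB m) h 1"
proof (induction k arbitrary: h)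
  case 0 then show ?case by simp
next
  case (Suc k)
  define b where "b = bidvec 2 sB h"
  have "payment (tbB m) (b#h) 1 = payment (tbB m) h 1"
    by (cases "clean h") (auto simp: tbB_def b_def sB_def)
  then show ?case using Suc.IH[of "b#h"] by (simp add: b_def)
qed

lemma bund1: "bundle_value m vB \<sigma> tb h 1 = 0"
  unfolding bundle_value_def vB_def by simp
lemma bund1': "bundle_value m vB \<sigma> tb h (Suc 0) = 0"
  unfolding bundle_value_def vB_def by simp

lemma speB: "is_SPE 2 m vB (\<sigma>B m) (tbB m) sB"
  unfolding is_SPE_def
proof (intro conjI allI impI)
  fix i h assume "i < (2::nat)" "valid_node 2 h \<and> length h < m"
  show "0 \<le> sB i h" by (simp add: sB_def)
next
  fix h i d assume h: "valid_node 2 h \<and> length h < m" and i: "i < (2::nat)"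
  have k: "length h + (m - length h) = m" "1 \<le> m - length h" using h by auto
  show "UB m (outcome 2 m (sB(i := d)) h) i \<le> UB m (outcome 2 m sB h) i"
  proof (cases "i = 0")
    case True
    have t1: "\<forall>h. (sB(0 := d)) 1 h = sB 1 h" by simp
    show ?thesis
    proof (cases "clean h")
      case c: True
      show ?thesis unfolding outcome_def True
        using lemC[where t="sB(0:=d)", OF t1 c k] lemEC[OF c k] by simp
    next
      case c: False
      show ?thesis unfolding outcome_def True
        using lemU[where t="sB(0:=d)", OF t1 c k(1)] lemEU[OF c k(1)] by simp
    qed
  next
    case False
    then have i1: "i = 1" using i by auto
    have t0: "\<forall>h. (sB(1 := d)) 0 h = sB 0 h" by simp
    show ?thesis unfolding outcome_def i1 utility_def bund1
      using lemP1[where t="sB(1:=d)", OF t0, of m h "m - length h"] lemP1eq[of m "m - length h" h] by simp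
  qed
qed

lemma sum2: "(\<Sum>i<(2::nat). f i) = f 0 + (f 1 :: real)"
  by (simp add: numeral_2_eq_2)

lemma partB:
  assumes m: "1 \<le> m"
  shows "opt 2 m vB \<ge> 1 * real m * welfare 2 m vB (\<sigma>B m) (tbB m) (outcome 2 m sB []) \<and> opt 2 m vB > 0"
proof -
  have H: "outcome 2 m sB [] = playn 2 sB m []" unfolding outcome_def by simp
  have u: "UB m (playn 2 sB m []) 0 = 1"
    using lemEC[of "[]" m m] m by (simp add: utility_def bundle_value_def clean_def)
  have p: "payment (tbB m) (playn 2 sB m []) 0 = 0" using lemPC[of "[]" m m] by (simp add: clean_def)
  have bv: "bundle_value m vB (\<sigma>B m) (tbB m) (playn 2 sB m []) 0 = 1" using u p by (simp add: utility_def)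
  have w: "welfare 2 m vB (\<sigma>B m) (tbB m) (outcome 2 m sB []) = 1"
    unfolding welfare_def H sum2 using bv bund1 by simp
  define f0 where "f0 = (\<lambda>j\<in>{0..<m}. (0::nat))"
  have f0: "f0 \<in> {0..<m} \<rightarrow>\<^sub>E {0..<2}" unfolding f0_def by auto
  have s: "(\<Sum>j<m. vB (f0 j) j) = real m" unfolding f0_def vB_def by simp
  have "real m \<le> opt 2 m vB" unfolding opt_def
    by (rule Max_ge) (use f0 s in \<open>auto intro!: finite_PiE bexI[of _ f0] simp: image_iff\<close>)
  then show ?thesis using w m by simp
qed



lemma zero_dev:
  assumes vo: "valid_order m \<sigma>" and vnn: "\<forall>i j. 0 \<le> v i j" and i: "i < n" and t: "t i = (\<lambda>_. 0)"
  shows "length h + k \<le> m \<Longrightarrow> utility m v \<sigma> tb h i \<le> utility m v \<sigma> tb (playn n t k h) i"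
proof (induction k arbitrary: h)
  case 0 then show ?case by simp
next
  case (Suc k)
  define b where "b = bidvec n t h"
  have bi: "b i = 0" using i t unfolding b_def bidvec_def by simp
  have "utility m v \<sigma> tb h i \<le> utility m v \<sigma> tb (b#h) i"
    using util_step[OF vo, of h v tb b i] Suc.prems bi vnn by auto
  also have "\<dots> \<le> utility m v \<sigma> tb (playn n t k (b#h)) i" by (rule Suc.IH) (use Suc.prems in simp)
  finally show ?case by (simp add: b_def)
qed

lemma step_exists: "\<not> P 0 \<Longrightarrow> P (m::nat) \<Longrightarrow> \<exists>k<m. \<not> P k \<and> P (Suc k)"
proof (induction m)
  case 0 then show ?case by simp
next
  case (Suc m)
  then show ?case by (cases "P m") (auto intro: less_SucI)
qed

lemma partA:
  fixes n m :: nat and v :: "nat \<Rightarrow> nat \<Rightarrow> real" and \<sigma> tb s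
  assumes n: "1 \<le> n" and m: "1 \<le> m" and vnn: "\<forall>i j. 0 \<le> v i j"
    and vo: "valid_order m \<sigma>" and vt: "valid_tiebreak n tb" and spe: "is_SPE n m v \<sigma> tb s"
  shows "welfare n m v \<sigma> tb (outcome n m s []) \<ge> (1/2) * opt n m v / real m"
proof -
  define p where "p k = playn n s k []" for k
  have pS: "p (Suc k) = bidvec n s (p k) # p k" for k unfolding p_def by (rule playn_Suc)
  have plen: "length (p k) = k" for k unfolding p_def by (simp add: playn_len)
  have spe1: "\<And>i h. i < n \<Longrightarrow> valid_node n h \<Longrightarrow> length h < m \<Longrightarrow> 0 \<le> s i h"
    using spe unfolding is_SPE_def by blast
  have spe2: "\<And>h i d. valid_node n h \<Longrightarrow> length h < m \<Longrightarrow> i < n \<Longrightarrow>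
      (\<forall>h'. valid_node n h' \<and> length h' < m \<longrightarrow> 0 \<le> d h') \<Longrightarrow>
      utility m v \<sigma> tb (outcome n m (s(i := d)) h) i \<le> utility m v \<sigma> tb (outcome n m s h) i"
    using spe unfolding is_SPE_def by blast
  have bvnn: "\<And>h j. valid_node n h \<Longrightarrow> length h < m \<Longrightarrow> 0 \<le> bidvec n s h j"
    using spe1 unfolding bidvec_def by auto
  have bvvalid: "\<And>h. valid_node n h \<Longrightarrow> length h < m \<Longrightarrow> valid_bids n (bidvec n s h)"
    unfolding valid_bids_def bidvec_def using spe1 by auto
  have pvalid: "k \<le> m \<Longrightarrow> valid_node n (p k)" for k
  proof (induction k)
    case 0 show ?case by (simp add: p_def valid_node_def)
  next
    case (Suc k) then have "valid_node n (p k)" "length (p k) < m" using plen by auto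
    then show ?case unfolding pS valid_node_def using bvvalid unfolding valid_node_def by auto
  qed
  have pmono: "k + d \<le> m \<Longrightarrow> payment tb (p k) i \<le> payment tb (p (k+d)) i" for k d i
  proof (induction d)
    case 0 show ?case by simp
  next
    case (Suc d)
    then have "payment tb (p k) i \<le> payment tb (p (k+d)) i" by simp
    also have "\<dots> \<le> payment tb (p (k + Suc d)) i"
      using bvnn[OF pvalid[of "k+d"], of i] Suc.prems plen by (simp add: pS)
    finally show ?case .
  qed
  have claim1: "\<And>h i. valid_node n h \<Longrightarrow> length h \<le> m \<Longrightarrow> i < n \<Longrightarrow>
      utility m v \<sigma> tb h i \<le> utility m v \<sigma> tb (outcome n m s h) i"
  proof -
    fix h i assume h: "valid_node n h" "length h \<le> m" and i: "i < n"
    show "utility m v \<sigma> tb h i \<le> utility m v \<sigma> tb (outcome n m s h) i"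
    proof (cases "length h = m")
      case True then show ?thesis by (simp add: outcome_def)
    next
      case False
      have "utility m v \<sigma> tb h i \<le> utility m v \<sigma> tb (outcome n m (s(i := (\<lambda>_. 0))) h) i"
        unfolding outcome_def by (rule zero_dev[OF vo vnn i]) (use h in auto)
      also have "\<dots> \<le> utility m v \<sigma> tb (outcome n m s h) i"
        by (rule spe2) (use h i False in auto)
      finally show ?thesis .
    qed
  qed
  have bnn: "\<And>h i. 0 \<le> bundle_value m v \<sigma> tb h i" using bundle_nonneg[OF vnn] by blast
  define S where "S = {0..<n} \<times> {0..<m}"
  define M where "M = Max (case_prod v ` S)"
  have finS: "finite S" "S \<noteq> {}" unfolding S_def using n m by auto
  have "M \<in> case_prod v ` S" unfolding M_def using finS by (intro Max_in) auto
  then obtain i0 j0 where ij: "i0 < n" "j0 < m" "v i0 j0 = M" unfolding S_def by auto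
  have Mge: "\<And>i j. i < n \<Longrightarrow> j < m \<Longrightarrow> v i j \<le> M"
    unfolding M_def using finS by (intro Max_ge) (auto simp: S_def)
  have optle: "opt n m v \<le> real m * M"
    unfolding opt_def
  proof (rule Max.boundedI)
    show "finite ((\<lambda>f. \<Sum>j<m. v (f j) j) ` ({0..<m} \<rightarrow>\<^sub>E {0..<n}))" by (auto intro: finite_PiE)
    have "(\<lambda>j. if j < m then 0 else undefined) \<in> {0..<m} \<rightarrow>\<^sub>E {0..<n}" using n by auto
    then show "(\<lambda>f. \<Sum>j<m. v (f j) j) ` ({0..<m} \<rightarrow>\<^sub>E {0..<n}) \<noteq> {}" by blast
  next
    fix a assume "a \<in> (\<lambda>f. \<Sum>j<m. v (f j) j) ` ({0..<m} \<rightarrow>\<^sub>E {0..<n})"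
    then obtain f where f: "f \<in> {0..<m} \<rightarrow>\<^sub>E {0..<n}" "a = (\<Sum>j<m. v (f j) j)" by auto
    have "(\<Sum>j<m. v (f j) j) \<le> (\<Sum>j<m. M)" using f(1) by (intro sum_mono Mge) auto
    then show "a \<le> real m * M" using f(2) by simp
  qed
  have domm: "dom (alloc \<sigma> tb (p m)) = {0..<m}"
    using alloc_dom[OF vo, of "p m" tb] plen by (intro card_subset_eq) auto
  obtain k where k: "k < m" "j0 \<notin> dom (alloc \<sigma> tb (p k))" "j0 \<in> dom (alloc \<sigma> tb (p (Suc k)))"
    using step_exists[of "\<lambda>k. j0 \<in> dom (alloc \<sigma> tb (p k))" m] domm ij(2) by (auto simp: p_def)
  have j0: "\<sigma> (alloc \<sigma> tb (p k)) = j0" using k(2,3) by (auto simp: pS split: if_splits)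
  define h where "h = p k"
  define b where "b = bidvec n s h"
  define w where "w = tb h b"
  have hv: "valid_node n h" "length h = k" using pvalid[of k] k plen unfolding h_def by auto
  have w: "w < n" "\<And>i. i < n \<Longrightarrow> b i \<le> b w" using vt unfolding valid_tiebreak_def w_def by auto
  have bnn': "\<And>j. 0 \<le> b j" unfolding b_def using bvnn hv k by auto
  define H where "H = p m"
  have outh: "outcome n m s h = H"
  proof -
    have "p m = playn n s (m - k) (p k)" unfolding p_def using playn_add[of n s k "m-k" "[]"] k by simp
    then show ?thesis unfolding outcome_def H_def h_def by (simp add: plen)
  qed
  have out0: "outcome n m s [] = H" unfolding outcome_def H_def p_def by simp
  have bw: "b w \<le> bundle_value m v \<sigma> tb H w"
  proof -
    have "utility m v \<sigma> tb h w \<le> utility m v \<sigma> tb H w" using claim1[OF hv(1) _ w(1)] hv k outh by simp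
    moreover have "payment tb (p (Suc k)) w \<le> payment tb H w"
      using pmono[of "Suc k" "m - Suc k" w] k unfolding H_def by simp
    moreover have "payment tb (p (Suc k)) w = payment tb h w + b w"
      unfolding pS h_def[symmetric] b_def[symmetric] using w_def by simp
    moreover have "0 \<le> bundle_value m v \<sigma> tb h w" by (rule bnn)
    ultimately show ?thesis unfolding utility_def by linarith
  qed
  have bi0: "v i0 j0 \<le> bundle_value m v \<sigma> tb H i0 + b w + e" if e: "0 < e" for e
  proof -
    define B where "B = b w + e"
    define d where "d = (\<lambda>h'. if h' = h then B else s i0 h')"
    define s' where "s' = s(i0 := d)"
    have Bpos: "0 \<le> B" using bnn'[of w] e unfolding B_def by simp
    have dnn: "\<forall>h'. valid_node n h' \<and> length h' < m \<longrightarrow> 0 \<le> d h'"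
      unfolding d_def using Bpos spe1[OF ij(1)] by auto
    have dev: "utility m v \<sigma> tb (outcome n m s' []) i0 \<le> utility m v \<sigma> tb H i0"
      using spe2[of "[]" i0 d, OF _ _ ij(1) dnn] m out0 unfolding s'_def by (simp add: valid_node_def)
    have pk: "playn n s' k [] = h"
      unfolding h_def p_def
      by (rule playn_cong[symmetric]) (auto simp: s'_def d_def h_def plen)
    define b' where "b' = bidvec n s' h"
    have b'i0: "b' i0 = B" unfolding b'_def bidvec_def s'_def d_def using ij(1) by simp
    have b'o: "\<And>j. j \<noteq> i0 \<Longrightarrow> b' j = b j" unfolding b'_def b_def bidvec_def s'_def by simp
    have win: "tb h b' = i0"
    proof (rule ccontr)
      assume ne: "tb h b' \<noteq> i0"
      have "b' i0 \<le> b' (tb h b')" "tb h b' < n" using vt ij(1) unfolding valid_tiebreak_def by auto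
      then have "B \<le> b (tb h b')" using b'i0 b'o[OF ne] by simp
      also have "\<dots> \<le> b w" using w(2) \<open>tb h b' < n\<close> by simp
      finally show False using e unfolding B_def by simp
    qed
    have ps: "playn n s' (Suc k) [] = b' # h" unfolding b'_def playn_Suc pk ..
    have o1: "outcome n m s' [] = playn n s' (m - Suc k) (b' # h)"
      unfolding outcome_def using k ps playn_add[of n s' "Suc k" "m - Suc k" "[]"] by simp
    have o2: "playn n s' (m - Suc k) (b' # h) = outcome n m s (b' # h)"
      unfolding outcome_def
    proof -
      have e: "m - length (b'#h) = m - Suc k" using hv(2) by simp
      show "playn n s' (m - Suc k) (b'#h) = playn n s (m - length (b'#h)) (b'#h)"
        unfolding e by (rule playn_cong[symmetric]) (use hv in \<open>auto simp: s'_def d_def\<close>)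
    qed
    have vb': "valid_node n (b' # h)"
    proof -
      have a: "\<forall>j<n. 0 \<le> b' j" using b'i0 b'o bnn' Bpos by metis
      have c: "\<forall>j. n \<le> j \<longrightarrow> b' j = 0" unfolding b'_def bidvec_def by simp
      show ?thesis using a c hv(1) unfolding valid_node_def valid_bids_def by simp
    qed
    have c1: "utility m v \<sigma> tb (b'#h) i0 \<le> utility m v \<sigma> tb (outcome n m s (b'#h)) i0"
      by (rule claim1[OF vb' _ ij(1)]) (use hv k in simp)
    have us: "utility m v \<sigma> tb (b'#h) i0 = utility m v \<sigma> tb h i0 + v i0 j0 - B"
      using util_step[OF vo, of h v tb b' i0] hv k win j0 b'i0 unfolding h_def by simp
    have "payment tb h i0 \<le> payment tb H i0"
      using pmono[of k "m - k" i0] k unfolding H_def h_def by simp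
    moreover have "0 \<le> bundle_value m v \<sigma> tb h i0" by (rule bnn)
    moreover have "utility m v \<sigma> tb h i0 + v i0 j0 - B \<le> utility m v \<sigma> tb H i0"
      using dev o1 o2 c1 us by simp
    ultimately show ?thesis unfolding utility_def B_def by linarith
  qed
  have vb: "v i0 j0 \<le> bundle_value m v \<sigma> tb H i0 + bundle_value m v \<sigma> tb H w"
  proof (rule field_le_epsilon)
    fix e :: real assume "0 < e"
    then show "v i0 j0 \<le> bundle_value m v \<sigma> tb H i0 + bundle_value m v \<sigma> tb H w + e"
      using bi0[of e] bw by linarith
  qed
  define W where "W = welfare n m v \<sigma> tb H"
  have le1: "bundle_value m v \<sigma> tb H i0 \<le> W" unfolding W_def welfare_def
    by (rule member_le_sum) (use ij bnn in auto)
  have le2: "bundle_value m v \<sigma> tb H w \<le> W" unfolding W_def welfare_def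
    by (rule member_le_sum) (use w bnn in auto)
  have MW: "M \<le> 2 * W" using vb le1 le2 ij(3) by linarith
  have "real m * M \<le> real m * (2 * W)" using MW by (rule mult_left_mono) simp
  then have o: "opt n m v \<le> 2 * W * real m" using optle by (simp add: mult.commute mult.left_commute)
  have mpos: "0 < real m" using m by simp
  have "(1/2) * opt n m v / real m \<le> W"
    using o mpos by (simp add: pos_divide_le_eq)
  then show ?thesis using out0 unfolding W_def by simp
qed

theorem mainTheorem1:
  shows
  "(\<exists>c::real. c > 0 \<and>
     (\<forall>n m (v::nat \<Rightarrow> nat \<Rightarrow> real) \<sigma> tb s.
        1 \<le> n \<longrightarrow> 1 \<le> m \<longrightarrow> (\<forall>i j. 0 \<le> v i j) \<longrightarrow>
        valid_order m \<sigma> \<longrightarrow> valid_tiebreak n tb \<longrightarrow> is_SPE n m v \<sigma> tb s \<longrightarrow>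
        welfare n m v \<sigma> tb (outcome n m s []) \<ge> c * opt n m v / real m))
   \<and>
   (\<exists>c'::real. c' > 0 \<and>
     (\<forall>m::nat. 1 \<le> m \<longrightarrow>
        (\<exists>(v::nat \<Rightarrow> nat \<Rightarrow> real) \<sigma> tb s.
           (\<forall>i j. 0 \<le> v i j) \<and> (\<forall>i j. v i j = v i 0) \<and>
           valid_order m \<sigma> \<and> valid_tiebreak 2 tb \<and> is_SPE 2 m v \<sigma> tb s \<and>
           opt 2 m v > 0 \<and>
           opt 2 m v \<ge> c' * real m * welfare 2 m v \<sigma> tb (outcome 2 m s []))))"
  proof (rule conjI)
  show "\<exists>c::real. c > 0 \<and>
     (\<forall>n m (v::nat \<Rightarrow> nat \<Rightarrow> real) \<sigma> tb s.
        1 \<le> n \<longrightarrow> 1 \<le> m \<longrightarrow> (\<forall>i j. 0 \<le> v i j) \<longrightarrow>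
        valid_order m \<sigma> \<longrightarrow> valid_tiebreak n tb \<longrightarrow> is_SPE n m v \<sigma> tb s \<longrightarrow>
        welfare n m v \<sigma> tb (outcome n m s []) \<ge> c * opt n m v / real m)"
    apply (rule exI[of _ "1/2"])
    apply (intro conjI allI impI)
     apply simp
    apply (rule partA)
         apply assumption+
    done
next
  show "\<exists>c'::real. c' > 0 \<and>
     (\<forall>m::nat. 1 \<le> m \<longrightarrow>
        (\<exists>(v::nat \<Rightarrow> nat \<Rightarrow> real) \<sigma> tb s.
           (\<forall>i j. 0 \<le> v i j) \<and> (\<forall>i j. v i j = v i 0) \<and>
           valid_order m \<sigma> \<and> valid_tiebreak 2 tb \<and> is_SPE 2 m v \<sigma> tb s \<and>
           opt 2 m v > 0 \<and>
           opt 2 m v \<ge> c' * real m * welfare 2 m v \<sigma> tb (outcome 2 m s [])))"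
  proof (rule exI[of _ 1], intro conjI allI impI)
    fix m :: nat assume m: "1 \<le> m"
    show "\<exists>(v::nat \<Rightarrow> nat \<Rightarrow> real) \<sigma> tb s.
           (\<forall>i j. 0 \<le> v i j) \<and> (\<forall>i j. v i j = v i 0) \<and>
           valid_order m \<sigma> \<and> valid_tiebreak 2 tb \<and> is_SPE 2 m v \<sigma> tb s \<and>
           opt 2 m v > 0 \<and>
           opt 2 m v \<ge> 1 * real m * welfare 2 m v \<sigma> tb (outcome 2 m s [])"
      using partB[OF m] voB[of m] vtB[of m] speB[of m]
      by (intro exI[of _ vB] exI[of _ "\<sigma>B m"] exI[of _ "tbB m"] exI[of _ sB]) (auto simp: vB_def)
  qed simp
qed

end
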